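(* Let \(V(G)=O\uplus I\uplus P\) be the Gallai–Edmonds decomposition of a graph \(G\). Then: (1) If \(I\cup P\) is an independent set in \(G\), then \(P=\emptyset\). (2) Let \(v,w\in O\) be two distinct vertices which lie in the same connected component of the induced subgraph \(G[O]\), and let \(G'=G[V(G)\setminus\{v,w\}]\). Then \(MM(G')\leq MM(G)-1\).
   Context: All graphs are finite, undirected and simple; \(MM(G)\) is the size of a maximum matching of \(G\). For \(X\subseteq V(G)\), \(N(X)\) is the set of vertices not in \(X\) adjacent to some vertex of \(X\). The Gallai–Edmonds decomposition of \(G\) is the partition \(V(G)=O\uplus I\uplus P\) where \(O\) is the set of vertices \(v\) such that some maximum matching of \(G\) leaves \(v\) unsaturated (not an end-point of any matching edge), \(I=N(O)\), and \(P=V(G)\setminus(I\cup O)\). *)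

theory Defs
  imports Main
begin

definition graph :: "'a set \<Rightarrow> 'a set set \<Rightarrow> bool" where
  "graph V E \<longleftrightarrow> finite V \<and> (\<forall>e\<in>E. \<exists>u v. e = {u, v} \<and> u \<noteq> v \<and> u \<in> V \<and> v \<in> V)"

definition matching :: "'a set set \<Rightarrow> 'a set set \<Rightarrow> bool" where
  "matching E M \<longleftrightarrow> M \<subseteq> E \<and> (\<forall>e1\<in>M. \<forall>e2\<in>M. e1 \<noteq> e2 \<longrightarrow> e1 \<inter> e2 = {})"

definition MM :: "'a set set \<Rightarrow> nat" where
  "MM E = Max {card M | M. matching E M}"

definition max_matching :: "'a set set \<Rightarrow> 'a set set \<Rightarrow> bool" where
  "max_matching E M \<longleftrightarrow> matching E M \<and> card M = MM E"

definition induced_edges :: "'a set set \<Rightarrow> 'a set \<Rightarrow> 'a set set" where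
  "induced_edges E X = {e \<in> E. e \<subseteq> X}"

definition nbhd :: "'a set \<Rightarrow> 'a set set \<Rightarrow> 'a set \<Rightarrow> 'a set" where
  "nbhd V E X = {u \<in> V - X. \<exists>x\<in>X. {u, x} \<in> E}"

definition GE_O :: "'a set \<Rightarrow> 'a set set \<Rightarrow> 'a set" where
  "GE_O V E = {v \<in> V. \<exists>M. max_matching E M \<and> v \<notin> \<Union>M}"

definition GE_I :: "'a set \<Rightarrow> 'a set set \<Rightarrow> 'a set" where
  "GE_I V E = nbhd V E (GE_O V E)"

definition GE_P :: "'a set \<Rightarrow> 'a set set \<Rightarrow> 'a set" where
  "GE_P V E = V - (GE_I V E \<union> GE_O V E)"

definition independent :: "'a set set \<Rightarrow> 'a set \<Rightarrow> bool" where
  "independent E S \<longleftrightarrow> (\<forall>u\<in>S. \<forall>v\<in>S. {u, v} \<notin> E)"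

definition same_component :: "'a set set \<Rightarrow> 'a set \<Rightarrow> 'a \<Rightarrow> 'a \<Rightarrow> bool" where
  "same_component E X u v \<longleftrightarrow> u \<in> X \<and> v \<in> X \<and>
     (u, v) \<in> {(x, y). {x, y} \<in> induced_edges E X}\<^sup>*"

end

theory Submission
  imports Defs
begin

lemma g_edge: "graph V E \<Longrightarrow> e \<in> E \<Longrightarrow> \<exists>u v. e = {u, v} \<and> u \<noteq> v \<and> u \<in> V \<and> v \<in> V"
  unfolding graph_def by blast

lemma g_finE: "graph V E \<Longrightarrow> finite E"
proof -
  assume g: "graph V E"
  have "E \<subseteq> Pow V" using g_edge[OF g] by blast
  moreover have "finite V" using g unfolding graph_def by simp
  ultimately show ?thesis by (meson finite_Pow_iff finite_subset)
qed

lemma m_fin: "graph V E \<Longrightarrow> matching E M \<Longrightarrow> finite M"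
  unfolding matching_def by (meson g_finE finite_subset)

lemma card_Un_match: assumes g: "graph V E" and m: "matching E M"
  shows "card (\<Union>M) = 2 * card M"
proof -
  have sub: "M \<subseteq> E" using m unfolding matching_def by simp
  have "card (\<Union>M) = sum card M"
    apply (rule card_Union_disjoint)
    using m unfolding matching_def pairwise_def disjnt_def apply blast
    using g_edge[OF g] sub by blast
  also have "\<dots> = sum (\<lambda>_. 2) M"
    apply (rule sum.cong, simp)
    using g_edge[OF g] sub by fastforce
  finally show ?thesis by simp
qed

lemma fin_union: "graph V E \<Longrightarrow> matching E M \<Longrightarrow> finite (\<Union>M)"
proof -
  assume g: "graph V E" and m: "matching E M"
  have "\<forall>e\<in>M. finite e" using m g_edge[OF g] unfolding matching_def by fastforce
  thus ?thesis using m_fin[OF g m] by blast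
qed

lemma fin_cards: assumes g: "graph V E"
  shows "finite {card M | M. matching E M}"
proof -
  have "{card M | M. matching E M} \<subseteq> {..card E}"
    using g_finE[OF g] card_mono unfolding matching_def by fastforce
  thus ?thesis using finite_subset by blast
qed

lemma le_MM: "graph V E \<Longrightarrow> matching E M \<Longrightarrow> card M \<le> MM E"
  unfolding MM_def using fin_cards by (metis (mono_tags, lifting) Max_ge mem_Collect_eq)

lemma ex_max: assumes g: "graph V E" shows "\<exists>M. max_matching E M"
proof -
  have "matching E {}" unfolding matching_def by simp
  hence ne: "{card M | M. matching E M} \<noteq> {}" by blast
  have "MM E \<in> {card M | M. matching E M}"
    unfolding MM_def using Max_in[OF fin_cards[OF g] ne] .
  then obtain M where "matching E M" "card M = MM E" by auto
  thus ?thesis unfolding max_matching_def by blast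
qed

lemma augment: assumes g: "graph V E" and mm: "max_matching E M" and e: "e \<in> E"
  and dis: "e \<inter> \<Union>M = {}" shows False
proof -
  have m: "matching E M" using mm max_matching_def by blast
  have ene: "e \<noteq> {}" using g_edge[OF g e] by blast
  have enot: "e \<notin> M" using dis ene by blast
  have "matching E (insert e M)" using m e dis unfolding matching_def by blast
  hence "card (insert e M) \<le> MM E" using le_MM[OF g] by blast
  moreover have "card (insert e M) = card M + 1" using m_fin[OF g m] enot by simp
  ultimately show False using mm unfolding max_matching_def by simp
qed

lemma swap_match:
  assumes m: "matching E M'" and e: "e \<in> E" "e = {x,y}" and x: "x \<notin> \<Union>M'"
    and f: "f \<in> M'" "y \<in> f"
  shows "matching E (insert e (M' - {f}))"
proof -
  have sub: "M' \<subseteq> E" and dis: "\<forall>e1\<in>M'. \<forall>e2\<in>M'. e1 \<noteq> e2 \<longrightarrow> e1 \<inter> e2 = {}"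
    using m unfolding matching_def by auto
  have yg: "y \<notin> g" if "g \<in> M' - {f}" for g
  proof
    assume "y \<in> g"
    hence "g \<inter> f \<noteq> {}" using f by blast
    thus False using dis that f(1) by blast
  qed
  have xg: "x \<notin> g" if "g \<in> M'" for g using x that by blast
  have eg: "e \<inter> g = {}" if "g \<in> M' - {f}" for g
    using yg[OF that] xg[of g] that e(2) by auto
  show ?thesis unfolding matching_def
  proof (intro conjI ballI impI)
    show "insert e (M' - {f}) \<subseteq> E" using sub e(1) by blast
  next
    fix e1 e2 assume a: "e1 \<in> insert e (M' - {f})" "e2 \<in> insert e (M' - {f})" "e1 \<noteq> e2"
    show "e1 \<inter> e2 = {}"
    proof (cases "e1 = e")
      case True
      then show ?thesis using a eg by auto
    next
      case False
      note F = this
      show ?thesis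
      proof (cases "e2 = e")
        case True
        then show ?thesis using a eg F by auto
      next
        case False
        then show ?thesis using a F dis by auto
      qed
    qed
  qed
qed

lemma R_edge: "(a,b) \<in> {(x,y). {x,y} \<in> induced_edges E X} \<Longrightarrow> {a,b} \<in> E \<and> a \<in> X \<and> b \<in> X"
  unfolding induced_edges_def by auto

lemma main2:
  assumes g: "graph V E"
  shows "(u,v) \<in> {(x,y). {x,y} \<in> induced_edges E (GE_O V E)} ^^ n \<Longrightarrow> u \<noteq> v
     \<Longrightarrow> max_matching E M \<Longrightarrow> u \<notin> \<Union>M \<Longrightarrow> v \<notin> \<Union>M \<Longrightarrow> False"
proof (induction n arbitrary: u v M rule: less_induct)
  case (less n)
  define R where "R = {(x,y). {x,y} \<in> induced_edges E (GE_O V E)}"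
  have one: False if "(a,b) \<in> R" "max_matching E N" "a \<notin> \<Union>N" "b \<notin> \<Union>N" for a b N
  proof -
    have "{a,b} \<in> E" using R_edge[of a b E "GE_O V E"] that(1) unfolding R_def by simp
    moreover have "{a,b} \<inter> \<Union>N = {}" using that by blast
    ultimately show False using augment[OF g that(2)] by blast
  qed
  have irr: "a \<noteq> b" if "(a,b) \<in> R" for a b
    using R_edge[of a b E] that g_edge[OF g, of "{a,b}"] unfolding R_def by auto
  show False
  proof (cases n)
    case 0
    then show ?thesis using less by simp
  next
    case (Suc m)
    have "(u,v) \<in> R ^^ Suc m" using less(2) Suc unfolding R_def by simp
    then obtain t where ut: "(u,t) \<in> R ^^ m" and tv: "(t,v) \<in> R" by (rule relpow_Suc_E)
    show False
    proof (cases "m = 0")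
      case True
      then show ?thesis using ut tv one less by simp
    next
      case False
      have tO: "t \<in> GE_O V E" using R_edge[of t v E "GE_O V E"] tv unfolding R_def by simp
      have tnv: "t \<noteq> v" using irr tv by blast
      show False
      proof (cases "t = u")
        case True
        then show ?thesis using one tv less by blast
      next
        case tnu: False
        obtain M0 where M0: "max_matching E M0" "t \<notin> \<Union>M0" using tO unfolding GE_O_def by blast
        define P where "P = (\<lambda>N. max_matching E N \<and> t \<notin> \<Union>N)"
        have "\<exists>N. P N \<and> (\<forall>y. P y \<longrightarrow> card (M \<inter> y) \<le> card (M \<inter> N))"
        proof (rule ex_has_greatest_nat[where k=M0 and b="card M + 1"])
          show "P M0" using M0 P_def by simp
          have "finite M" using less(4) m_fin[OF g] unfolding max_matching_def by blast
          hence "card (M \<inter> y) \<le> card M" for y by (simp add: card_mono)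
          thus "\<forall>y. P y \<longrightarrow> card (M \<inter> y) < card M + 1" by (simp add: le_imp_less_Suc)
        qed
        then obtain N where N: "max_matching E N" "t \<notin> \<Union>N"
          and Nbest: "\<And>y. P y \<Longrightarrow> card (M \<inter> y) \<le> card (M \<inter> N)" unfolding P_def by blast
        have uN: "u \<in> \<Union>N"
        proof (rule ccontr)
          assume "u \<notin> \<Union>N"
          then show False using less(1)[of m u t N] Suc ut tnu N unfolding R_def by auto
        qed
        have vN: "v \<in> \<Union>N" using one tv N by blast
        have mM: "matching E M" and mN: "matching E N"
          using less(4) N unfolding max_matching_def by auto
        have cardeq: "card (\<Union>M) = card (\<Union>N)"
          using card_Un_match[OF g mM] card_Un_match[OF g mN] less(4) N(1)
          unfolding max_matching_def by simp
        have finM: "finite (\<Union>M)" and finN: "finite (\<Union>N)"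
          using fin_union[OF g mM] fin_union[OF g mN] by auto
        have "\<exists>x. x \<in> \<Union>M \<and> x \<notin> \<Union>N \<and> x \<noteq> t"
        proof (rule ccontr)
          assume "\<not> ?thesis"
          hence sub: "\<Union>M - \<Union>N \<subseteq> {t}" by blast
          have ceq: "card (\<Union>M - \<Union>N) = card (\<Union>N - \<Union>M)"
            using cardeq finM finN by (simp add: card_Diff_subset_Int Int_commute)
          have le1: "card (\<Union>M - \<Union>N) \<le> card {t}" using sub by (intro card_mono) auto
          have "{u,v} \<subseteq> \<Union>N - \<Union>M" using uN vN less(5,6) by blast
          hence "card {u,v} \<le> card (\<Union>N - \<Union>M)" using finN by (intro card_mono) auto
          hence "2 \<le> card (\<Union>N - \<Union>M)" using less(3) by simp
          thus False using ceq le1 by simp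
        qed
        then obtain x where x: "x \<in> \<Union>M" "x \<notin> \<Union>N" "x \<noteq> t" by blast
        then obtain e where e: "e \<in> M" "x \<in> e" by blast
        have eE: "e \<in> E" using e mM unfolding matching_def by blast
        then obtain y where exy: "e = {x,y}" using g_edge[OF g eE] e(2) by blast
        have yN: "y \<in> \<Union>N"
        proof (rule ccontr)
          assume "y \<notin> \<Union>N"
          hence "e \<inter> \<Union>N = {}" using exy x by blast
          thus False using augment[OF g N(1) eE] by blast
        qed
        then obtain f where f: "f \<in> N" "y \<in> f" by blast
        define N' where "N' = insert e (N - {f})"
        have mN': "matching E N'" unfolding N'_def
          using swap_match[OF mN eE exy x(2) f] .
        have eN: "e \<notin> N" using e x by blast
        have cpos: "card N > 0" using f m_fin[OF g mN] card_gt_0_iff by blast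
        have cN': "card N' = card N" unfolding N'_def using eN f m_fin[OF g mN] cpos
          by (simp add: card.insert_remove)
        have yt: "y \<noteq> t" using yN N(2) by blast
        have tN': "t \<notin> \<Union>N'" unfolding N'_def using N(2) exy x(3) yt by blast
        have PN': "P N'" unfolding P_def max_matching_def
          using mN' cN' tN' N(1) unfolding max_matching_def by simp
        have fM: "f \<notin> M"
        proof
          assume "f \<in> M"
          moreover have "f \<inter> e \<noteq> {}" using f(2) exy by blast
          ultimately have "f = e" using mM e(1) unfolding matching_def by meson
          thus False using eN f by blast
        qed
        have "M \<inter> N' = insert e (M \<inter> N)" unfolding N'_def using fM e by blast
        hence "card (M \<inter> N') = card (M \<inter> N) + 1"
          using eN m_fin[OF g mM] by simp
        thus False using Nbest[OF PN'] by simp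
      qed
    qed
  qed
qed

theorem corollary2:
  fixes V :: "'a set" and E :: "'a set set"
  assumes "graph V E"
  shows "(independent E (GE_I V E \<union> GE_P V E) \<longrightarrow> GE_P V E = {})
     \<and> (\<forall>v w. v \<in> GE_O V E \<and> w \<in> GE_O V E \<and> v \<noteq> w \<and> same_component E (GE_O V E) v w
          \<longrightarrow> MM (induced_edges E (V - {v, w})) \<le> MM E - 1)"
proof (intro conjI impI allI)
  have g: "graph V E" using assms .
  assume ind: "independent E (GE_I V E \<union> GE_P V E)"
  show "GE_P V E = {}"
  proof (rule ccontr)
    assume "GE_P V E \<noteq> {}"
    then obtain p where p: "p \<in> GE_P V E" by blast
    hence pV: "p \<in> V" and pI: "p \<notin> GE_I V E" and pO: "p \<notin> GE_O V E"
      unfolding GE_P_def by auto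
    obtain M where M: "max_matching E M" using ex_max[OF g] by blast
    have "p \<in> \<Union>M" using pO pV M unfolding GE_O_def by blast
    then obtain e where e: "e \<in> M" "p \<in> e" by blast
    have eE: "e \<in> E" using e M unfolding max_matching_def matching_def by blast
    obtain a b where ab: "e = {a,b}" "a \<noteq> b" "a \<in> V" "b \<in> V" using g_edge[OF g eE] by blast
    obtain i where i: "e = {p,i}" "i \<in> V" "i \<noteq> p" using ab e(2) by blast
    have iO: "i \<notin> GE_O V E"
    proof
      assume "i \<in> GE_O V E"
      hence "p \<in> GE_I V E" unfolding GE_I_def nbhd_def using pV pO eE i(1) by blast
      thus False using pI by blast
    qed
    have "i \<in> GE_I V E \<union> GE_P V E" using iO i(2) unfolding GE_P_def by blast
    moreover have "p \<in> GE_I V E \<union> GE_P V E" using p by blast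
    ultimately have "{p,i} \<notin> E" using ind unfolding independent_def by blast
    thus False using eE i(1) by blast
  qed
next
  have g: "graph V E" using assms .
  fix v w
  assume a: "v \<in> GE_O V E \<and> w \<in> GE_O V E \<and> v \<noteq> w \<and> same_component E (GE_O V E) v w"
  then obtain n where n: "(v,w) \<in> {(x,y). {x,y} \<in> induced_edges E (GE_O V E)} ^^ n"
    unfolding same_component_def rtrancl_power by blast
  define F where "F = induced_edges E (V - {v,w})"
  have FE: "F \<subseteq> E" unfolding F_def induced_edges_def by blast
  have gF: "graph V F" using g FE unfolding graph_def by blast
  obtain N where N: "max_matching F N" using ex_max[OF gF] by blast
  have mN: "matching E N" using N FE unfolding max_matching_def matching_def by blast
  have le: "card N \<le> MM E" using le_MM[OF g mN] .
  have "card N \<noteq> MM E"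
  proof
    assume "card N = MM E"
    hence mmN: "max_matching E N" using mN unfolding max_matching_def by blast
    have "\<forall>e\<in>N. e \<subseteq> V - {v,w}" using N unfolding max_matching_def matching_def F_def induced_edges_def
      by blast
    hence "v \<notin> \<Union>N" "w \<notin> \<Union>N" by blast+
    thus False using main2[OF g n _ mmN] a by blast
  qed
  hence "card N \<le> MM E - 1" using le by linarith
  thus "MM (induced_edges E (V - {v, w})) \<le> MM E - 1"
    using N unfolding F_def max_matching_def by simp
qed

end
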